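(* Let $n_x,n_y,n_z\ge 1$ be integers, $N:=n_xn_yn_z$, and let $f\in[0,1]^N$. Let $\mu_1,\mu_2,\mu_3>0$. Then each of the following two minimization problems has a minimizer, i.e. the infimum is attained at some $(u,s,l)\in\mathbb{R}^N\times\mathbb{R}^N\times\mathbb{R}^N$ with $u+s+l=f$: (a) $\displaystyle \inf_{u,s,l\in\mathbb{R}^N,\ u+s+l=f}\ \Big(\mu_1\|\nabla_{x,z}u\|_{2,1}+\mu_2\|\Delta_z u\|_1+\iota_{[0,1]^N}(u)\Big)+\|\nabla_y s\|_1+\mu_3\|\nabla_{x,y}l\|_{2,1}$; (b) $\displaystyle \inf_{u,s,l\in\mathbb{R}^N,\ u+s+l=f}\ \Big(\mu_1\|\nabla_{x,y,z}u\|_{2,1}+\iota_{[0,1]^N}(u)\Big)+\|\nabla_y s\|_1+\mu_3\|\nabla_{x,y}l\|_{2,1}$.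
   Context: A 3D image of size $n_x\times n_y\times n_z$ is identified with a vector in $\mathbb{R}^N$, $N=n_xn_yn_z$ (column- and slice-wise reshaping). $\otimes$ denotes the Kronecker product and $I_m$ the $m\times m$ identity. For $m\ge1$, $D_m\in\mathbb{R}^{m,m}$ is the forward difference matrix whose $i$-th row, for $i=1,\dots,m-1$, has entry $-1$ in column $i$ and $1$ in column $i+1$ (zeros elsewhere), and whose last row is zero. $D_m^2\in\mathbb{R}^{m,m}$ is the matrix whose first and last rows are zero and whose $i$-th row, for $i=2,\dots,m-1$, has entries $1,-2,1$ in columns $i-1,i,i+1$ (zeros elsewhere). Set $D_x:=I_{n_z}\otimes I_{n_y}\otimes D_{n_x}$, $D_y:=I_{n_z}\otimes D_{n_y}\otimes I_{n_x}$, $D_z:=D_{n_z}\otimes I_{n_y}\otimes I_{n_x}$, $D_{zz}:=D^2_{n_z}\otimes I_{n_y}\otimes I_{n_x}$, and define $\nabla_y:=D_y$, $\Delta_z:=D_{zz}$, and the stacked operators $\nabla_{x,z}:=\begin{pmatrix}D_x\\ D_z\end{pmatrix}$, $\nabla_{x,y}:=\begin{pmatrix}D_x\\ D_y\end{pmatrix}$, $\nabla_{x,y,z}:=\begin{pmatrix}D_x\\ D_y\\ D_z\end{pmatrix}$. For $w\in\mathbb{R}^{dN}$ the grouped norm is $\|w\|_{2,1}:=\sum_{i=1}^N\big(\sum_{j=0}^{d-1}w_{i+jN}^2\big)^{1/2}$; $\|\cdot\|_1$ is the usual $\ell_1$ norm. For a set $\mathcal{C}$, $\iota_{\mathcal{C}}(u)=0$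 if $u\in\mathcal{C}$ and $+\infty$ otherwise. *)

theory Defs
  imports "HOL-Analysis.Analysis" "HOL-Library.Extended_Real"
begin

text \<open>A 3D image of size nx x ny x nz is a vector in R^N, N = nx*ny*nz, represented as a
  function nat => real of which only the entries 0..N-1 matter (0-based indexing).
  Pixel (i,j,k) (0-based) sits at position p = i + nx*j + nx*ny*k (column- and slice-wise
  reshaping). The Kronecker operators below are written out entrywise.\<close>

definition Dx :: "nat \<Rightarrow> nat \<Rightarrow> nat \<Rightarrow> (nat \<Rightarrow> real) \<Rightarrow> (nat \<Rightarrow> real)" where
  "Dx nx ny nz v p = (if p mod nx + 1 < nx then v (p + 1) - v p else 0)"

definition Dy :: "nat \<Rightarrow> nat \<Rightarrow> nat \<Rightarrow> (nat \<Rightarrow> real) \<Rightarrow> (nat \<Rightarrow> real)" where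
  "Dy nx ny nz v p = (if (p div nx) mod ny + 1 < ny then v (p + nx) - v p else 0)"

definition Dz :: "nat \<Rightarrow> nat \<Rightarrow> nat \<Rightarrow> (nat \<Rightarrow> real) \<Rightarrow> (nat \<Rightarrow> real)" where
  "Dz nx ny nz v p = (if p div (nx * ny) + 1 < nz then v (p + nx * ny) - v p else 0)"

definition Dzz :: "nat \<Rightarrow> nat \<Rightarrow> nat \<Rightarrow> (nat \<Rightarrow> real) \<Rightarrow> (nat \<Rightarrow> real)" where
  "Dzz nx ny nz v p =
     (if 0 < p div (nx * ny) \<and> p div (nx * ny) + 1 < nz
      then v (p - nx * ny) - 2 * v p + v (p + nx * ny) else 0)"

definition norm21 :: "nat \<Rightarrow> (nat \<Rightarrow> real) list \<Rightarrow> real" where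
  "norm21 N ws = (\<Sum>i<N. sqrt (\<Sum>w\<leftarrow>ws. (w i)\<^sup>2))"

definition norm1 :: "nat \<Rightarrow> (nat \<Rightarrow> real) \<Rightarrow> real" where
  "norm1 N w = (\<Sum>i<N. \<bar>w i\<bar>)"

definition iota01 :: "nat \<Rightarrow> (nat \<Rightarrow> real) \<Rightarrow> ereal" where
  "iota01 N u = (if \<forall>i<N. 0 \<le> u i \<and> u i \<le> 1 then 0 else \<infinity>)"

definition feasible :: "nat \<Rightarrow> (nat \<Rightarrow> real) \<Rightarrow> ((nat \<Rightarrow> real) \<times> (nat \<Rightarrow> real) \<times> (nat \<Rightarrow> real)) set" where
  "feasible N f = {(u, s, l). \<forall>i<N. u i + s i + l i = f i}"

definition objA :: "nat \<Rightarrow> nat \<Rightarrow> nat \<Rightarrow> real \<Rightarrow> real \<Rightarrow> real \<Rightarrow>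
    (nat \<Rightarrow> real) \<Rightarrow> (nat \<Rightarrow> real) \<Rightarrow> (nat \<Rightarrow> real) \<Rightarrow> ereal" where
  "objA nx ny nz \<mu>1 \<mu>2 \<mu>3 u s l =
     (let N = nx * ny * nz in
      ereal (\<mu>1 * norm21 N [Dx nx ny nz u, Dz nx ny nz u]) + ereal (\<mu>2 * norm1 N (Dzz nx ny nz u))
      + iota01 N u + ereal (norm1 N (Dy nx ny nz s))
      + ereal (\<mu>3 * norm21 N [Dx nx ny nz l, Dy nx ny nz l]))"

definition objB :: "nat \<Rightarrow> nat \<Rightarrow> nat \<Rightarrow> real \<Rightarrow> real \<Rightarrow>
    (nat \<Rightarrow> real) \<Rightarrow> (nat \<Rightarrow> real) \<Rightarrow> (nat \<Rightarrow> real) \<Rightarrow> ereal" where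
  "objB nx ny nz \<mu>1 \<mu>3 u s l =
     (let N = nx * ny * nz in
      ereal (\<mu>1 * norm21 N [Dx nx ny nz u, Dy nx ny nz u, Dz nx ny nz u])
      + iota01 N u + ereal (norm1 N (Dy nx ny nz s))
      + ereal (\<mu>3 * norm21 N [Dx nx ny nz l, Dy nx ny nz l]))"

end

theory Submission
  imports Defs
begin

lemma div_step: "(q::nat) mod m + 1 < m \<Longrightarrow> (q+1) div m = q div m"
  using add_0[of "q mod m"] add_0[of "q div m"] add_0[of "q mod 0 + 1"]
    div_add1_eq[of q "1 mod m" m] by force
lemma idx_bound: "0 < (A::nat) \<Longrightarrow> p div A + 1 < M \<Longrightarrow> p + A < A*M"
  by (metis Euclidean_Rings.div_eq_0_iff add_gr_0 bot_nat_0.not_eq_extremum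
    div_add_self2 div_mult2_eq less_imp_add_positive mult_eq_0_iff)
lemma idx_bound1: "p < (A::nat)*M \<Longrightarrow> p mod A + 1 < A \<Longrightarrow> p+1 < A*M"
  by (metis (no_types, lifting) One_nat_def add.right_neutral add_Suc_right
    linorder_neqE_nat mod_add_left_eq mod_less mod_mult_self1_is_0
    not_add_less2 not_less_eq)

lemma idxDx: fixes p nx ny nz :: nat assumes "p < nx*ny*nz" "p mod nx + 1 < nx" shows "p + 1 < nx*ny*nz"
  using idx_bound1[of p nx "ny*nz"] assms by (simp add: mult.assoc)

lemma idxDy: fixes p nx ny nz :: nat assumes "p < nx*ny*nz" "(p div nx) mod ny + 1 < ny" shows "p + nx < nx*ny*nz"
proof -
  have nx: "nx > 0" using assms(1) by (cases nx) auto
  have "p < (ny*nz)*nx" using assms(1) by (simp add: ac_simps)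
  then have "p div nx < ny*nz" using nx by (simp add: div_less_iff_less_mult)
  then have "p div nx + 1 < ny*nz" using idx_bound1[of "p div nx" ny nz] assms(2) by simp
  then show ?thesis using idx_bound[OF nx, of p "ny*nz"] by (simp add: mult.assoc)
qed

lemma idxDz: fixes p nx ny nz :: nat assumes "p < nx*ny*nz" "p div (nx*ny) + 1 < nz" shows "p + nx*ny < nx*ny*nz"
proof -
  have nx: "nx*ny > 0" using assms(1) by (cases "nx*ny") auto
  show ?thesis using idx_bound[OF nx, of p nz] assms by simp
qed

lemma Dx_cong: "\<forall>i<nx*ny*nz. a i = b i \<Longrightarrow> p < nx*ny*nz \<Longrightarrow> Dx nx ny nz a p = Dx nx ny nz b p"
  unfolding Dx_def using idxDx[of p nx ny nz] by auto
lemma Dy_cong: "\<forall>i<nx*ny*nz. a i = b i \<Longrightarrow> p < nx*ny*nz \<Longrightarrow> Dy nx ny nz a p = Dy nx ny nz b p"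
  unfolding Dy_def using idxDy[of p nx ny nz] by auto
lemma Dz_cong: "\<forall>i<nx*ny*nz. a i = b i \<Longrightarrow> p < nx*ny*nz \<Longrightarrow> Dz nx ny nz a p = Dz nx ny nz b p"
  unfolding Dz_def using idxDz[of p nx ny nz] by auto
lemma Dzz_cong: "\<forall>i<nx*ny*nz. a i = b i \<Longrightarrow> p < nx*ny*nz \<Longrightarrow> Dzz nx ny nz a p = Dzz nx ny nz b p"
  unfolding Dzz_def using idxDz[of p nx ny nz] by auto

lemma norm1_cong: "\<forall>i<N. a i = b i \<Longrightarrow> norm1 N a = norm1 N b"
  unfolding norm1_def by (rule sum.cong) auto
lemma norm21_cong2: "\<forall>i<N. a i = a' i \<Longrightarrow> \<forall>i<N. b i = b' i \<Longrightarrow> norm21 N [a,b] = norm21 N [a',b']"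
  unfolding norm21_def by (rule sum.cong) auto
lemma norm21_cong3: "\<forall>i<N. a i = a' i \<Longrightarrow> \<forall>i<N. b i = b' i \<Longrightarrow> \<forall>i<N. c i = c' i \<Longrightarrow> norm21 N [a,b,c] = norm21 N [a',b',c']"
  unfolding norm21_def by (rule sum.cong) auto

lemma norm1_nn: "norm1 N a \<ge> 0" unfolding norm1_def by (auto intro: sum_nonneg)
lemma norm21_nn: "norm21 N ws \<ge> 0" unfolding norm21_def by (auto intro!: sum_nonneg real_sqrt_ge_zero sum_list_nonneg)

lemma norm1_le_21a: "norm1 N a \<le> norm21 N [a,b]"
  unfolding norm1_def norm21_def
  by (rule sum_mono) (simp add: real_le_rsqrt)
lemma norm1_le_21b: "norm1 N b \<le> norm21 N [a,b]"
  unfolding norm1_def norm21_def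
  by (rule sum_mono) (simp add: real_le_rsqrt)

lemma cont_Dx: "(\<And>i. continuous_on S (\<lambda>x. h x i)) \<Longrightarrow> continuous_on S (\<lambda>x. Dx nx ny nz (h x) p)"
  unfolding Dx_def by (cases "p mod nx + 1 < nx") (auto intro!: continuous_intros)
lemma cont_Dy: "(\<And>i. continuous_on S (\<lambda>x. h x i)) \<Longrightarrow> continuous_on S (\<lambda>x. Dy nx ny nz (h x) p)"
  unfolding Dy_def by (cases "(p div nx) mod ny + 1 < ny") (auto intro!: continuous_intros)
lemma cont_Dz: "(\<And>i. continuous_on S (\<lambda>x. h x i)) \<Longrightarrow> continuous_on S (\<lambda>x. Dz nx ny nz (h x) p)"
  unfolding Dz_def by (cases "p div (nx * ny) + 1 < nz") (auto intro!: continuous_intros)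
lemma cont_Dzz: "(\<And>i. continuous_on S (\<lambda>x. h x i)) \<Longrightarrow> continuous_on S (\<lambda>x. Dzz nx ny nz (h x) p)"
  unfolding Dzz_def by (cases "0 < p div (nx * ny) \<and> p div (nx * ny) + 1 < nz") (auto intro!: continuous_intros)
lemma cont_norm1: "(\<And>i. continuous_on S (\<lambda>x. h x i)) \<Longrightarrow> continuous_on S (\<lambda>x. norm1 N (h x))"
  unfolding norm1_def by (auto intro!: continuous_intros)
lemma cont_norm21_2: "(\<And>i. continuous_on S (\<lambda>x. a x i)) \<Longrightarrow> (\<And>i. continuous_on S (\<lambda>x. b x i)) \<Longrightarrow> continuous_on S (\<lambda>x. norm21 N [a x, b x])"
  unfolding norm21_def by (auto intro!: continuous_intros)
lemma cont_norm21_3: "(\<And>i. continuous_on S (\<lambda>x. a x i)) \<Longrightarrow> (\<And>i. continuous_on S (\<lambda>x. b x i)) \<Longrightarrow> (\<And>i. continuous_on S (\<lambda>x. c x i)) \<Longrightarrow> continuous_on S (\<lambda>x. norm21 N [a x, b x, c x])"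
  unfolding norm21_def by (auto intro!: continuous_intros)

lemma cont_coord: "continuous_on S (\<lambda>x::nat\<Rightarrow>real. x i)"
  by (rule continuous_on_subset[OF continuous_on_product_coordinates]) simp
lemma cont_fst_coord: "continuous_on S (\<lambda>x::(nat\<Rightarrow>real)\<times>(nat\<Rightarrow>real). fst x i)"
  by (rule continuous_on_compose2[OF continuous_on_product_coordinates continuous_on_fst]) auto
lemma cont_snd_coord: "continuous_on S (\<lambda>x::(nat\<Rightarrow>real)\<times>(nat\<Rightarrow>real). snd x i)"
  by (rule continuous_on_compose2[OF continuous_on_product_coordinates continuous_on_snd]) auto

lemma path_gen:
  fixes l D :: "nat \<Rightarrow> real"
  assumes "\<And>t. t+1 < m \<Longrightarrow> D (a + e*t) = l (a + e*t + e) - l (a + e*t)" and "j < m"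
  shows "\<bar>l (a + e*j) - l a\<bar> \<le> (\<Sum>t<j. \<bar>D (a + e*t)\<bar>)"
  using assms(2)
proof (induction j)
  case 0 then show ?case by simp
next
  case (Suc j)
  have D: "D (a + e*j) = l (a + e*j + e) - l (a + e*j)" using assms(1)[of j] Suc.prems by simp
  have "l (a + e*Suc j) - l a = D (a + e*j) + (l (a + e*j) - l a)"
    using D by (simp add: algebra_simps)
  then have "\<bar>l (a + e*Suc j) - l a\<bar> \<le> \<bar>D (a + e*j)\<bar> + \<bar>l (a + e*j) - l a\<bar>" by simp
  also have "\<dots> \<le> \<bar>D (a + e*j)\<bar> + (\<Sum>t<j. \<bar>D (a + e*t)\<bar>)" using Suc by simp
  finally show ?case by simp
qed

lemma sum_img:
  fixes D :: "nat \<Rightarrow> real"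
  assumes "e > 0" "\<And>t. t < j \<Longrightarrow> a + e*t < N"
  shows "(\<Sum>t<j. \<bar>D (a + e*t)\<bar>) \<le> norm1 N D"
proof -
  have inj: "inj_on (\<lambda>t. a + e*t) {..<j}" using assms(1) by (auto simp: inj_on_def)
  have "(\<Sum>t<j. \<bar>D (a + e*t)\<bar>) = (\<Sum>i\<in>(\<lambda>t. a + e*t) ` {..<j}. \<bar>D i\<bar>)"
    using sum.reindex[OF inj, of "\<lambda>i. \<bar>D i\<bar>"] by simp
  also have "\<dots> \<le> (\<Sum>i<N. \<bar>D i\<bar>)"
    by (rule sum_mono2) (use assms(2) in auto)
  finally show ?thesis unfolding norm1_def .
qed


lemma path_bound:
  fixes p nx ny nz :: nat and l :: "nat \<Rightarrow> real"
  assumes p: "p < nx*ny*nz"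
  shows "\<bar>l p - l (nx*ny*(p div (nx*ny)))\<bar> \<le> norm1 (nx*ny*nz) (Dx nx ny nz l) + norm1 (nx*ny*nz) (Dy nx ny nz l)"
proof -
  define N where "N = nx*ny*nz"
  have nx: "nx > 0" and ny: "ny > 0" using p by (cases nx; cases ny; auto)+
  define k where "k = p div (nx*ny)"
  define j where "j = (p div nx) mod ny"
  define r where "r = p mod nx"
  define c where "c = nx*ny*k"
  have "p < nz*(nx*ny)" using p by (simp add: ac_simps)
  then have k: "k < nz" using nx ny unfolding k_def by (simp add: div_less_iff_less_mult)
  have kdiv: "(p div nx) div ny = k" unfolding k_def by (simp add: div_mult2_eq)
  have pdec: "p = c + nx*j + r"
  proof -
    have "p = nx*(p div nx) + r" unfolding r_def by simp
    moreover have "p div nx = ny*k + j" unfolding j_def using kdiv by (metis div_mult_mod_eq mult.commute)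
    ultimately show ?thesis unfolding c_def by (simp add: algebra_simps)
  qed
  have j: "j < ny" unfolding j_def using ny by simp
  have r: "r < nx" unfolding r_def using nx by simp
  have kN: "nx*ny*(k+1) \<le> N" unfolding N_def using k by (intro mult_le_mono2) simp
  have A: "\<bar>l (c + nx*j) - l c\<bar> \<le> (\<Sum>t<j. \<bar>Dy nx ny nz l (c + nx*t)\<bar>)"
  proof (rule path_gen[OF _ j])
    fix t assume t: "t+1 < ny"
    have "(c + nx*t) div nx = ny*k + t" unfolding c_def using nx by (simp add: ac_simps)
    then have "((c + nx*t) div nx) mod ny = t" using t by simp
    then show "Dy nx ny nz l (c + nx*t) = l (c + nx*t + nx) - l (c + nx*t)"
      unfolding Dy_def using t by simp
  qed
  have A2: "(\<Sum>t<j. \<bar>Dy nx ny nz l (c + nx*t)\<bar>) \<le> norm1 N (Dy nx ny nz l)"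
  proof (rule sum_img[OF nx])
    fix t assume t: "t < j"
    have "nx*t < nx*ny" using t j nx by simp
    then have "c + nx*t < nx*ny*(k+1)" unfolding c_def by (simp add: algebra_simps)
    then show "c + nx*t < N" using kN by linarith
  qed
  define d where "d = c + nx*j"
  have B: "\<bar>l (d + 1*r) - l d\<bar> \<le> (\<Sum>t<r. \<bar>Dx nx ny nz l (d + 1*t)\<bar>)"
  proof (rule path_gen[OF _ r])
    fix t assume t: "t+1 < nx"
    have dd: "d = nx*(ny*k+j)" unfolding d_def c_def by (simp add: algebra_simps)
    have "(d + 1*t) mod nx = t" unfolding dd using t by simp
    then show "Dx nx ny nz l (d + 1*t) = l (d + 1*t + 1) - l (d + 1*t)"
      unfolding Dx_def using t by simp
  qed
  have B2: "(\<Sum>t<r. \<bar>Dx nx ny nz l (d + 1*t)\<bar>) \<le> norm1 N (Dx nx ny nz l)"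
  proof (rule sum_img)
    fix t assume t: "t < r"
    have "d + nx = nx*(ny*k + j + 1)" unfolding d_def c_def by (simp add: algebra_simps)
    also have "\<dots> \<le> nx*(ny*(k+1))" using j by (intro mult_le_mono2) simp
    finally have "d + nx \<le> nx*ny*(k+1)" by (simp add: ac_simps)
    then show "d + 1*t < N" using kN t r by linarith
  qed simp
  have "l p - l (nx*ny*(p div (nx*ny))) = (l (d + 1*r) - l d) + (l (c + nx*j) - l c)"
    using pdec unfolding d_def c_def k_def by simp
  then have "\<bar>l p - l (nx*ny*(p div (nx*ny)))\<bar> \<le> \<bar>l (d + 1*r) - l d\<bar> + \<bar>l (c + nx*j) - l c\<bar>" by simp
  then show ?thesis using A A2 B B2 unfolding N_def by linarith
qed


lemma base_x: fixes p nx ny :: nat assumes "p mod nx + 1 < nx"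
  shows "(p+1) div (nx*ny) = p div (nx*ny)"
  using div_step[OF assms] by (simp add: div_mult2_eq)

lemma base_y: fixes p nx ny :: nat assumes "(p div nx) mod ny + 1 < ny" "nx > 0"
  shows "(p+nx) div (nx*ny) = p div (nx*ny)"
proof -
  have "(p+nx) div nx = p div nx + 1" using assms(2) by simp
  then show ?thesis using div_step[OF assms(1)] by (simp add: div_mult2_eq)
qed

lemma main:
  fixes g :: "(nat\<Rightarrow>real) \<Rightarrow> real" and obj :: "(nat\<Rightarrow>real) \<Rightarrow> (nat\<Rightarrow>real) \<Rightarrow> (nat\<Rightarrow>real) \<Rightarrow> ereal"
    and f :: "nat \<Rightarrow> real" and nx ny nz N :: nat and cmu :: real
  assumes N_def: "N = nx*ny*nz"
    and fbox: "\<forall>i < N. 0 \<le> f i \<and> f i \<le> 1" and mu: "cmu > 0"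
    and gcont: "continuous_on UNIV g" and gnn: "\<And>u. g u \<ge> 0"
    and gcong: "\<And>u u'. (\<forall>i<N. u i = u' i) \<Longrightarrow> g u = g u'"
    and objdef: "\<And>u s l. obj u s l = ereal (g u) + iota01 N u + ereal (norm1 N (Dy nx ny nz s))
                    + ereal (cmu * norm21 N [Dx nx ny nz l, Dy nx ny nz l])"
  shows "\<exists>u s l. (u,s,l) \<in> feasible N f \<and> obj u s l = (INF (u',s',l') \<in> feasible N f. obj u' s' l')"
proof -
  define G where "G u l = g u + norm1 N (Dy nx ny nz (\<lambda>i. f i - u i - l i))
     + cmu * norm21 N [Dx nx ny nz l, Dy nx ny nz l]" for u l
  have Gnn: "G u l \<ge> 0" for u l unfolding G_def using gnn[of u] norm1_nn[of N] norm21_nn[of N] mu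
    by (simp add: add_nonneg_nonneg)
  have objG: "obj u s l = (if (\<forall>i<N. 0 \<le> u i \<and> u i \<le> 1) then ereal (G u l) else \<infinity>)"
    if "(u,s,l) \<in> feasible N f" for u s l
  proof -
    have "\<forall>i<N. s i = f i - u i - l i" using that unfolding feasible_def by auto
    then have "norm1 N (Dy nx ny nz s) = norm1 N (Dy nx ny nz (\<lambda>i. f i - u i - l i))"
      by (intro norm1_cong) (auto intro!: Dy_cong simp: N_def)
    then show ?thesis unfolding objdef iota01_def G_def by auto
  qed
  define fb where "fb i = (if i < N then f i else 0)" for i
  define z where "z = (\<lambda>i::nat. 0::real)"
  define V0 where "V0 = G fb z"
  define B where "B = 2*V0/cmu"
  have B0: "B \<ge> 0" unfolding B_def V0_def using Gnn mu by simp
  define K where "K = (PiE UNIV (\<lambda>i. if i<N then {0..1} else {0::real})) \<times>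
                     (PiE UNIV (\<lambda>i. if i<N then {-B..B} else {0::real}))"
  have cpt: "compact (PiE UNIV (\<lambda>i::nat. if i<N then {a..b} else {0::real}))" for a b
  proof -
    have "compactin (product_topology (\<lambda>i. euclidean) UNIV) (PiE UNIV (\<lambda>i::nat. if i<N then {a..b} else {0::real}))"
      by (subst compactin_PiE) auto
    then show ?thesis by (simp add: euclidean_product_topology)
  qed
  have Kc: "compact K" unfolding K_def by (intro compact_Times cpt)
  have fbK: "(fb, z) \<in> K" unfolding K_def fb_def z_def using fbox B0 by auto
  have Gc: "continuous_on K (\<lambda>q. G (fst q) (snd q))"
  proof -
    have c1: "continuous_on UNIV (\<lambda>q::(nat\<Rightarrow>real)\<times>(nat\<Rightarrow>real). g (fst q))"
      by (rule continuous_on_compose2[OF gcont continuous_on_fst]) auto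
    have "continuous_on UNIV (\<lambda>q::(nat\<Rightarrow>real)\<times>(nat\<Rightarrow>real). G (fst q) (snd q))"
      unfolding G_def
      by (intro continuous_intros c1 cont_norm1 cont_norm21_2 cont_Dx cont_Dy cont_fst_coord cont_snd_coord)
    then show ?thesis using continuous_on_subset by blast
  qed
  obtain q0 where q0K: "q0 \<in> K" and q0min: "\<And>q. q \<in> K \<Longrightarrow> G (fst q0) (snd q0) \<le> G (fst q) (snd q)"
    using continuous_attains_inf[OF Kc _ Gc] fbK by blast
  define u0 where "u0 = fst q0"
  define l0 where "l0 = snd q0"
  define s0 where "s0 i = f i - u0 i - l0 i" for i
  have "\<forall>i. fst q0 i \<in> (if i<N then {0..1} else {0})" using q0K unfolding K_def by (auto simp: PiE_iff mem_Times_iff)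
  then have u0box: "\<forall>i<N. 0 \<le> u0 i \<and> u0 i \<le> 1" unfolding u0_def
    by (metis (no_types, lifting) atLeastAtMost_iff)
  have feas0: "(u0, s0, l0) \<in> feasible N f" unfolding feasible_def s0_def by auto
  have obj0: "obj u0 s0 l0 = ereal (G u0 l0)" using objG[OF feas0] u0box by simp
  have low: "G u0 l0 \<le> G u l" if box: "\<forall>i<N. 0 \<le> u i \<and> u i \<le> 1" for u l
  proof (cases "G u l \<le> V0")
    case False
    have "G u0 l0 \<le> V0" using q0min[OF fbK] unfolding V0_def u0_def l0_def by simp
    then show ?thesis using False by simp
  next
    case True
    define bs where "bs i = nx*ny*(i div (nx*ny))" for i
    define u' where "u' i = (if i < N then u i else 0)" for i
    define l' where "l' i = (if i < N then l i - l (bs i) else 0)" for i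
    have bsx: "bs (p+1) = bs p" if "p mod nx + 1 < nx" for p
      unfolding bs_def using base_x[OF that] by simp
    have bsy: "bs (p+nx) = bs p" if "(p div nx) mod ny + 1 < ny" "p < N" for p
    proof -
      have "nx > 0" using that(2) unfolding N_def by (cases nx) auto
      then show ?thesis unfolding bs_def using base_y[OF that(1)] by simp
    qed
    have Dxl: "Dx nx ny nz l' p = Dx nx ny nz l p" if "p < N" for p
    proof (cases "p mod nx + 1 < nx")
      case True
      then have "p+1 < N" using idxDx[of p nx ny nz] that unfolding N_def by blast
      then show ?thesis unfolding Dx_def l'_def using True that bsx[OF True] by simp
    qed (simp add: Dx_def)
    have Dyl: "Dy nx ny nz l' p = Dy nx ny nz l p" if "p < N" for p
    proof (cases "(p div nx) mod ny + 1 < ny")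
      case True
      then have "p+nx < N" using idxDy[of p nx ny nz] that unfolding N_def by blast
      then show ?thesis unfolding Dy_def l'_def using True that bsy[OF True that] by simp
    qed (simp add: Dy_def)
    have Dys: "Dy nx ny nz (\<lambda>i. f i - u' i - l' i) p = Dy nx ny nz (\<lambda>i. f i - u i - l i) p" if "p < N" for p
    proof (cases "(p div nx) mod ny + 1 < ny")
      case True
      then have "p+nx < N" using idxDy[of p nx ny nz] that unfolding N_def by blast
      then show ?thesis unfolding Dy_def l'_def u'_def using True that bsy[OF True that] by simp
    qed (simp add: Dy_def)
    have GG: "G u' l' = G u l"
    proof -
      have "g u' = g u" by (rule gcong) (simp add: u'_def)
      moreover have "norm1 N (Dy nx ny nz (\<lambda>i. f i - u' i - l' i)) = norm1 N (Dy nx ny nz (\<lambda>i. f i - u i - l i))"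
        by (rule norm1_cong) (simp add: Dys)
      moreover have "norm21 N [Dx nx ny nz l', Dy nx ny nz l'] = norm21 N [Dx nx ny nz l, Dy nx ny nz l]"
        by (rule norm21_cong2) (simp_all add: Dxl Dyl)
      ultimately show ?thesis unfolding G_def by simp
    qed
    have n21: "cmu * norm21 N [Dx nx ny nz l, Dy nx ny nz l] \<le> V0"
      using True gnn[of u] norm1_nn[of N "Dy nx ny nz (\<lambda>i. f i - u i - l i)"] unfolding G_def by linarith
    then have n21': "norm21 N [Dx nx ny nz l, Dy nx ny nz l] \<le> V0/cmu" using mu by (simp add: field_simps)
    have lb: "\<bar>l' p\<bar> \<le> B" for p
    proof (cases "p < N")
      case True
      have "\<bar>l p - l (bs p)\<bar> \<le> norm1 N (Dx nx ny nz l) + norm1 N (Dy nx ny nz l)"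
        using path_bound[of p nx ny nz l] True unfolding bs_def N_def by simp
      also have "\<dots> \<le> 2 * (V0/cmu)"
        using norm1_le_21a[of N "Dx nx ny nz l" "Dy nx ny nz l"] norm1_le_21b[of N "Dy nx ny nz l" "Dx nx ny nz l"] n21'
        by linarith
      finally show ?thesis unfolding l'_def B_def using True by simp
    next
      case False then show ?thesis unfolding l'_def using B0 by simp
    qed
    have lb2: "-B \<le> l p - l (bs p) \<and> l p - l (bs p) \<le> B" if "p < N" for p
      using lb[of p] that unfolding l'_def by (simp add: abs_le_iff)
    have "(u', l') \<in> K" unfolding K_def using box lb2
      by (auto simp: u'_def l'_def)
    from q0min[OF this] have "G u0 l0 \<le> G u' l'" unfolding u0_def l0_def by simp
    then show ?thesis using GG by simp
  qed
  have "obj u0 s0 l0 \<le> (INF (u',s',l') \<in> feasible N f. obj u' s' l')"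
  proof (rule INF_greatest)
    fix x assume x: "x \<in> feasible N f"
    obtain u s l where xe: "x = (u,s,l)" by (cases x) auto
    show "obj u0 s0 l0 \<le> (case x of (u', s', l') \<Rightarrow> obj u' s' l')"
      using objG[OF x[unfolded xe]] low[of u l] obj0 unfolding xe by auto
  qed
  moreover have "(INF (u',s',l') \<in> feasible N f. obj u' s' l') \<le> obj u0 s0 l0"
    using INF_lower[OF feas0, of "\<lambda>(u',s',l'). obj u' s' l'"] by simp
  ultimately show ?thesis using feas0 by (intro exI[of _ u0] exI[of _ s0] exI[of _ l0]) auto
qed


theorem proposition1:
  fixes nx ny nz :: nat and f :: "nat \<Rightarrow> real" and \<mu>1 \<mu>2 \<mu>3 :: real
  assumes "nx \<ge> 1" and "ny \<ge> 1" and "nz \<ge> 1"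
    and "\<forall>i < nx * ny * nz. 0 \<le> f i \<and> f i \<le> 1"
    and "\<mu>1 > 0" and "\<mu>2 > 0" and "\<mu>3 > 0"
  shows "(\<exists>u s l. (u, s, l) \<in> feasible (nx * ny * nz) f \<and>
            objA nx ny nz \<mu>1 \<mu>2 \<mu>3 u s l =
              (INF (u', s', l') \<in> feasible (nx * ny * nz) f. objA nx ny nz \<mu>1 \<mu>2 \<mu>3 u' s' l'))
       \<and> (\<exists>u s l. (u, s, l) \<in> feasible (nx * ny * nz) f \<and>
            objB nx ny nz \<mu>1 \<mu>3 u s l =
              (INF (u', s', l') \<in> feasible (nx * ny * nz) f. objB nx ny nz \<mu>1 \<mu>3 u' s' l'))"
proof
  let ?N = "nx*ny*nz"
  show "\<exists>u s l. (u, s, l) \<in> feasible (nx * ny * nz) f \<and>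
            objA nx ny nz \<mu>1 \<mu>2 \<mu>3 u s l =
              (INF (u', s', l') \<in> feasible (nx * ny * nz) f. objA nx ny nz \<mu>1 \<mu>2 \<mu>3 u' s' l')"
  proof (rule main[where g = "\<lambda>u. \<mu>1 * norm21 ?N [Dx nx ny nz u, Dz nx ny nz u] + \<mu>2 * norm1 ?N (Dzz nx ny nz u)"
        and nx = nx and ny = ny and nz = nz and cmu = \<mu>3])
    show "continuous_on UNIV (\<lambda>u. \<mu>1 * norm21 ?N [Dx nx ny nz u, Dz nx ny nz u] + \<mu>2 * norm1 ?N (Dzz nx ny nz u))"
      by (intro continuous_intros cont_norm1 cont_norm21_2 cont_Dx cont_Dz cont_Dzz cont_coord)
    show "\<mu>1 * norm21 ?N [Dx nx ny nz u, Dz nx ny nz u] + \<mu>2 * norm1 ?N (Dzz nx ny nz u) \<ge> 0" for u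
      using norm1_nn norm21_nn assms by (simp add: add_nonneg_nonneg)
    show "\<mu>1 * norm21 ?N [Dx nx ny nz u, Dz nx ny nz u] + \<mu>2 * norm1 ?N (Dzz nx ny nz u) =
          \<mu>1 * norm21 ?N [Dx nx ny nz u', Dz nx ny nz u'] + \<mu>2 * norm1 ?N (Dzz nx ny nz u')"
      if "\<forall>i<?N. u i = u' i" for u u'
    proof -
      have "norm21 ?N [Dx nx ny nz u, Dz nx ny nz u] = norm21 ?N [Dx nx ny nz u', Dz nx ny nz u']"
        by (rule norm21_cong2) (use that in \<open>auto intro!: Dx_cong Dz_cong\<close>)
      moreover have "norm1 ?N (Dzz nx ny nz u) = norm1 ?N (Dzz nx ny nz u')"
        by (rule norm1_cong) (use that in \<open>auto intro!: Dzz_cong\<close>)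
      ultimately show ?thesis by simp
    qed
  qed (use assms in \<open>simp_all add: objA_def Let_def\<close>)
  show "\<exists>u s l. (u, s, l) \<in> feasible (nx * ny * nz) f \<and>
            objB nx ny nz \<mu>1 \<mu>3 u s l =
              (INF (u', s', l') \<in> feasible (nx * ny * nz) f. objB nx ny nz \<mu>1 \<mu>3 u' s' l')"
  proof (rule main[where g = "\<lambda>u. \<mu>1 * norm21 ?N [Dx nx ny nz u, Dy nx ny nz u, Dz nx ny nz u]"
        and nx = nx and ny = ny and nz = nz and cmu = \<mu>3])
    show "continuous_on UNIV (\<lambda>u. \<mu>1 * norm21 ?N [Dx nx ny nz u, Dy nx ny nz u, Dz nx ny nz u])"
      by (intro continuous_intros cont_norm21_3 cont_Dx cont_Dy cont_Dz cont_coord)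
    show "\<mu>1 * norm21 ?N [Dx nx ny nz u, Dy nx ny nz u, Dz nx ny nz u] \<ge> 0" for u
      using norm21_nn assms by simp
    show "\<mu>1 * norm21 ?N [Dx nx ny nz u, Dy nx ny nz u, Dz nx ny nz u] =
          \<mu>1 * norm21 ?N [Dx nx ny nz u', Dy nx ny nz u', Dz nx ny nz u']"
      if "\<forall>i<?N. u i = u' i" for u u'
    proof -
      have "norm21 ?N [Dx nx ny nz u, Dy nx ny nz u, Dz nx ny nz u] = norm21 ?N [Dx nx ny nz u', Dy nx ny nz u', Dz nx ny nz u']"
        by (rule norm21_cong3) (use that in \<open>auto intro!: Dx_cong Dy_cong Dz_cong\<close>)
      then show ?thesis by simp
    qed
  qed (use assms in \<open>simp_all add: objB_def Let_def\<close>)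
qed

end
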